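(* Let $G$ be a polarized and anchored progressive graph. Then there exists at most one planar order $\prec$ on $E(G)$ such that: (1) $e_1\to e_2$ implies $e_1\prec e_2$; (2) for every vertex $v$ and $e_1,e_2\in I(v)$, $e_1<e_2$ in $I(v)$ iff $e_1\prec e_2$, and for $e_1,e_2\in O(v)$, $e_1<e_2$ in $O(v)$ iff $e_1\prec e_2$; (3) for $i_1,i_2\in I(G)$, $i_1<i_2$ in $I(G)$ iff $i_1\prec i_2$, and for $o_1,o_2\in O(G)$, $o_1<o_2$ in $O(G)$ iff $o_1\prec o_2$.
   Context: A progressive graph is a finite directed acyclic graph (parallel edges allowed) in which every source and every sink has degree one; degree-one vertices are boundary vertices. $I(G)$ (input edges) is the set of edges whose initial vertex is a boundary vertex, $O(G)$ (output edges) those whose terminal vertex is a boundary vertex. For a vertex $v$, $I(v)$ and $O(v)$ are its sets of incoming and outgoing edges. For edges write $e\to e'$ if $e\neq e'$ and there is a directed path whose first edge is $e$ and last edge is $e'$. A planar order on $G$ is a linear order $\prec$ on $E(G)$ such that (P1) $e_1\to e_2$ implies $e_1\prec e_2$; (P2) if $e_1\prec e_2\prec e_3$ and $e_1\to e_3$ then $e_1\to e_2$ or $e_2\to e_3$. $G$ is polarized if for every vertex $v$, linear orders $<$ on $I(v)$ and on $O(v)$ are given; $G$ is anchored if linear orders $<$ on $I(G)$ and on $O(G)$ are given. *)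

theory Defs
  imports Main
begin

definition in_edges :: "'e set \<Rightarrow> ('e \<Rightarrow> 'v) \<Rightarrow> 'v \<Rightarrow> 'e set" where
  "in_edges E tgt v = {e \<in> E. tgt e = v}"

definition out_edges :: "'e set \<Rightarrow> ('e \<Rightarrow> 'v) \<Rightarrow> 'v \<Rightarrow> 'e set" where
  "out_edges E src v = {e \<in> E. src e = v}"

definition vdegree :: "'e set \<Rightarrow> ('e \<Rightarrow> 'v) \<Rightarrow> ('e \<Rightarrow> 'v) \<Rightarrow> 'v \<Rightarrow> nat" where
  "vdegree E src tgt v = card (in_edges E tgt v) + card (out_edges E src v)"

definition progressive_graph ::
  "'v set \<Rightarrow> 'e set \<Rightarrow> ('e \<Rightarrow> 'v) \<Rightarrow> ('e \<Rightarrow> 'v) \<Rightarrow> bool" where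
  "progressive_graph V E src tgt \<longleftrightarrow>
     finite V \<and> finite E \<and>
     (\<forall>e\<in>E. src e \<in> V \<and> tgt e \<in> V) \<and>
     (\<forall>v. (v, v) \<notin> trancl {(src e, tgt e) | e. e \<in> E}) \<and>
     (\<forall>v\<in>V. in_edges E tgt v = {} \<longrightarrow> vdegree E src tgt v = 1) \<and>
     (\<forall>v\<in>V. out_edges E src v = {} \<longrightarrow> vdegree E src tgt v = 1)"

definition boundary :: "'v set \<Rightarrow> 'e set \<Rightarrow> ('e \<Rightarrow> 'v) \<Rightarrow> ('e \<Rightarrow> 'v) \<Rightarrow> 'v set" where
  "boundary V E src tgt = {v \<in> V. vdegree E src tgt v = 1}"

definition input_edges :: "'v set \<Rightarrow> 'e set \<Rightarrow> ('e \<Rightarrow> 'v) \<Rightarrow> ('e \<Rightarrow> 'v) \<Rightarrow> 'e set" where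
  "input_edges V E src tgt = {e \<in> E. src e \<in> boundary V E src tgt}"

definition output_edges :: "'v set \<Rightarrow> 'e set \<Rightarrow> ('e \<Rightarrow> 'v) \<Rightarrow> ('e \<Rightarrow> 'v) \<Rightarrow> 'e set" where
  "output_edges V E src tgt = {e \<in> E. tgt e \<in> boundary V E src tgt}"

definition edge_path :: "'e set \<Rightarrow> ('e \<Rightarrow> 'v) \<Rightarrow> ('e \<Rightarrow> 'v) \<Rightarrow> 'e \<Rightarrow> 'e \<Rightarrow> bool" where
  "edge_path E src tgt e e' \<longleftrightarrow>
     e \<noteq> e' \<and> (e, e') \<in> trancl {(a, b). a \<in> E \<and> b \<in> E \<and> tgt a = src b}"

definition slin_on :: "'a set \<Rightarrow> 'a rel \<Rightarrow> bool" where
  "slin_on A r \<longleftrightarrow> r \<subseteq> A \<times> A \<and> strict_linear_order_on A r"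

definition planar_order ::
  "'v set \<Rightarrow> 'e set \<Rightarrow> ('e \<Rightarrow> 'v) \<Rightarrow> ('e \<Rightarrow> 'v) \<Rightarrow> 'e rel \<Rightarrow> bool" where
  "planar_order V E src tgt P \<longleftrightarrow>
     slin_on E P \<and>
     (\<forall>e1 e2. edge_path E src tgt e1 e2 \<longrightarrow> (e1, e2) \<in> P) \<and>
     (\<forall>e1 e2 e3. (e1, e2) \<in> P \<and> (e2, e3) \<in> P \<and> edge_path E src tgt e1 e3 \<longrightarrow>
        edge_path E src tgt e1 e2 \<or> edge_path E src tgt e2 e3)"

definition polarized ::
  "'v set \<Rightarrow> 'e set \<Rightarrow> ('e \<Rightarrow> 'v) \<Rightarrow> ('e \<Rightarrow> 'v) \<Rightarrow> ('v \<Rightarrow> 'e rel) \<Rightarrow> ('v \<Rightarrow> 'e rel) \<Rightarrow> bool" where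
  "polarized V E src tgt inord outord \<longleftrightarrow>
     (\<forall>v\<in>V. slin_on (in_edges E tgt v) (inord v) \<and> slin_on (out_edges E src v) (outord v))"

definition anchored ::
  "'v set \<Rightarrow> 'e set \<Rightarrow> ('e \<Rightarrow> 'v) \<Rightarrow> ('e \<Rightarrow> 'v) \<Rightarrow> 'e rel \<Rightarrow> 'e rel \<Rightarrow> bool" where
  "anchored V E src tgt ginord goutord \<longleftrightarrow>
     slin_on (input_edges V E src tgt) ginord \<and> slin_on (output_edges V E src tgt) goutord"

definition compatible_order ::
  "'v set \<Rightarrow> 'e set \<Rightarrow> ('e \<Rightarrow> 'v) \<Rightarrow> ('e \<Rightarrow> 'v) \<Rightarrow> ('v \<Rightarrow> 'e rel) \<Rightarrow> ('v \<Rightarrow> 'e rel)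
    \<Rightarrow> 'e rel \<Rightarrow> 'e rel \<Rightarrow> 'e rel \<Rightarrow> bool" where
  "compatible_order V E src tgt inord outord ginord goutord P \<longleftrightarrow>
     planar_order V E src tgt P \<and>
     (\<forall>e1 e2. edge_path E src tgt e1 e2 \<longrightarrow> (e1, e2) \<in> P) \<and>
     (\<forall>v\<in>V. \<forall>e1\<in>in_edges E tgt v. \<forall>e2\<in>in_edges E tgt v.
        (e1, e2) \<in> inord v \<longleftrightarrow> (e1, e2) \<in> P) \<and>
     (\<forall>v\<in>V. \<forall>e1\<in>out_edges E src v. \<forall>e2\<in>out_edges E src v.
        (e1, e2) \<in> outord v \<longleftrightarrow> (e1, e2) \<in> P) \<and>
     (\<forall>i1\<in>input_edges V E src tgt. \<forall>i2\<in>input_edges V E src tgt.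
        (i1, i2) \<in> ginord \<longleftrightarrow> (i1, i2) \<in> P) \<and>
     (\<forall>o1\<in>output_edges V E src tgt. \<forall>o2\<in>output_edges V E src tgt.
        (o1, o2) \<in> goutord \<longleftrightarrow> (o1, o2) \<in> P)"

end

theory Submission
  imports Defs
begin

lemma slin_facts:
  assumes "slin_on E P"
  shows "P \<subseteq> E \<times> E" "trans P" "\<And>x. (x,x) \<notin> P"
    "\<And>x y. x \<in> E \<Longrightarrow> y \<in> E \<Longrightarrow> x \<noteq> y \<Longrightarrow> (x,y) \<in> P \<or> (y,x) \<in> P"
    "\<And>x y. (x,y) \<in> P \<Longrightarrow> (y,x) \<notin> P"
  using assms unfolding slin_on_def strict_linear_order_on_def irrefl_on_def total_on_def
  by (auto dest: transD)

lemma key_pair: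
  assumes s1: "slin_on E P1" and s2: "slin_on E P2" and fin: "finite E" and ne: "P1 \<noteq> P2"
  shows "\<exists>m m'. m \<in> E \<and> m' \<in> E \<and> m \<noteq> m' \<and> (m,m') \<in> P1 \<and> (m',m) \<in> P2 \<and>
     (\<forall>y. (y,m) \<in> P1 \<longrightarrow> (y,m') \<in> P2) \<and> (\<forall>y. (y,m') \<in> P2 \<longrightarrow> (y,m) \<in> P1)"
proof -
  note f1 = slin_facts[OF s1] and f2 = slin_facts[OF s2]
  define B where "B = {x \<in> E. {y. (y,x) \<in> P1} \<noteq> {y. (y,x) \<in> P2}}"
  have "B \<noteq> {}"
  proof
    assume "B = {}"
    hence eq: "\<And>x. x \<in> E \<Longrightarrow> {y. (y,x) \<in> P1} = {y. (y,x) \<in> P2}" unfolding B_def by blast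
    have "P1 = P2"
    proof (intro set_eqI, clarify)
      fix y x
      show "(y,x) \<in> P1 \<longleftrightarrow> (y,x) \<in> P2"
      proof
        assume "(y,x) \<in> P1" thus "(y,x) \<in> P2" using eq[of x] f1(1) by blast
      next
        assume "(y,x) \<in> P2" thus "(y,x) \<in> P1" using eq[of x] f2(1) by blast
      qed
    qed
    with ne show False by simp
  qed
  have wf1: "wf P1"
    by (rule finite_acyclic_wf) (use f1 fin in \<open>auto intro: finite_subset simp: acyclic_irrefl trancl_id irrefl_def\<close>)
  have wf2: "wf P2"
    by (rule finite_acyclic_wf) (use f2 fin in \<open>auto intro: finite_subset simp: acyclic_irrefl trancl_id irrefl_def\<close>)
  obtain m where mB: "m \<in> B" and mmin: "\<And>y. (y,m) \<in> P1 \<Longrightarrow> y \<notin> B"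
    using wfE_min[OF wf1, of _ B] \<open>B \<noteq> {}\<close> by blast
  have mE: "m \<in> E" using mB B_def by auto
  have dn: "\<And>y. (y,m) \<in> P1 \<Longrightarrow> {z. (z,y) \<in> P1} = {z. (z,y) \<in> P2}"
  proof -
    fix y assume "(y,m) \<in> P1"
    hence "y \<in> E" "y \<notin> B" using f1(1) mmin by auto
    thus "{z. (z,y) \<in> P1} = {z. (z,y) \<in> P2}" unfolding B_def by blast
  qed
  define S where "S = {y. (y,m) \<in> P1}"
  have "E - S \<noteq> {}" using mE f1(3) S_def by auto
  then obtain m' where m'ES: "m' \<in> E - S" and m'min: "\<And>y. (y,m') \<in> P2 \<Longrightarrow> y \<notin> E - S"
    using wfE_min[OF wf2, of _ "E - S"] by blast
  have lowS: "\<And>y. (y,m') \<in> P2 \<Longrightarrow> (y,m) \<in> P1"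
    using m'min f2(1) S_def by blast
  have sm': "\<And>s. (s,m) \<in> P1 \<Longrightarrow> (s,m') \<in> P2"
  proof -
    fix s assume sm: "(s,m) \<in> P1"
    hence sE: "s \<in> E" and "s \<noteq> m'" using f1(1) m'ES S_def by auto
    moreover have "(m',s) \<notin> P2"
    proof
      assume "(m',s) \<in> P2"
      hence "(m',s) \<in> P1" using dn[OF sm] by blast
      hence "(m',m) \<in> P1" using sm f1(2) by (meson transD)
      thus False using m'ES S_def by auto
    qed
    ultimately show "(s,m') \<in> P2" using f2(4)[of s m'] m'ES by auto
  qed
  have neq: "m \<noteq> m'"
  proof
    assume "m = m'"
    have "{y. (y,m) \<in> P1} = {y. (y,m) \<in> P2}"
    proof (intro set_eqI iffI; simp)
      fix y assume "(y,m) \<in> P1" thus "(y,m) \<in> P2" using sm' \<open>m = m'\<close> by simp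
    next
      fix y assume "(y,m) \<in> P2" thus "(y,m) \<in> P1" using lowS \<open>m = m'\<close> by simp
    qed
    thus False using mB B_def by auto
  qed
  have "(m,m') \<in> P1" using f1(4)[of m m'] mE m'ES neq S_def by auto
  moreover have "(m',m) \<in> P2"
  proof -
    have "(m,m') \<notin> P2" using m'min mE f1(3) S_def by auto
    thus ?thesis using f2(4)[of m m'] mE m'ES neq by auto
  qed
  ultimately show ?thesis using mE m'ES neq sm' lowS by blast
qed


lemma vpath:
  assumes "(a,b) \<in> {(a,b). a \<in> E \<and> b \<in> E \<and> tgt a = src b}\<^sup>+"
  shows "(tgt a, src b) \<in> {(src e, tgt e) | e. e \<in> E}\<^sup>*"
  using assms
proof (induction rule: trancl_induct)
  case (base y) thus ?case by auto
next
  case (step y z)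
  hence "(src y, tgt y) \<in> {(src e, tgt e) | e. e \<in> E}" by auto
  with step show ?case by (auto intro: rtrancl_into_rtrancl)
qed

lemma last_step:
  assumes "(a,b) \<in> {(a,b). a \<in> E \<and> b \<in> E \<and> tgt a = src b}\<^sup>+"
  shows "\<exists>x\<in>E. tgt x = src b"
  using assms by (cases rule: tranclE) auto

theorem proposition2p14:
  fixes V :: "'v set" and E :: "'e set" and src tgt :: "'e \<Rightarrow> 'v"
    and inord outord :: "'v \<Rightarrow> 'e rel" and ginord goutord :: "'e rel"
    and P1 P2 :: "'e rel"
  assumes "progressive_graph V E src tgt"
    and "polarized V E src tgt inord outord"
    and "anchored V E src tgt ginord goutord"
    and "compatible_order V E src tgt inord outord ginord goutord P1"
    and "compatible_order V E src tgt inord outord ginord goutord P2"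
  shows "P1 = P2"
proof (rule ccontr)
  assume ne: "P1 \<noteq> P2"
  let ?R = "{(a,b). a \<in> E \<and> b \<in> E \<and> tgt a = src b}"
  let ?Rv = "{(src e, tgt e) | e. e \<in> E}"
  have pg: "finite E" "\<And>e. e \<in> E \<Longrightarrow> src e \<in> V \<and> tgt e \<in> V" "\<And>v. (v,v) \<notin> ?Rv\<^sup>+"
    "\<And>v. v \<in> V \<Longrightarrow> in_edges E tgt v = {} \<Longrightarrow> vdegree E src tgt v = 1"
    using assms(1) unfolding progressive_graph_def by auto
  have pl1: "planar_order V E src tgt P1" and pl2: "planar_order V E src tgt P2"
    using assms(4,5) unfolding compatible_order_def by auto
  have oc1: "\<forall>v\<in>V. \<forall>e1\<in>out_edges E src v. \<forall>e2\<in>out_edges E src v.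
        (e1, e2) \<in> outord v \<longleftrightarrow> (e1, e2) \<in> P1"
   and oc2: "\<forall>v\<in>V. \<forall>e1\<in>out_edges E src v. \<forall>e2\<in>out_edges E src v.
        (e1, e2) \<in> outord v \<longleftrightarrow> (e1, e2) \<in> P2"
   and ic1: "\<forall>i1\<in>input_edges V E src tgt. \<forall>i2\<in>input_edges V E src tgt.
        (i1, i2) \<in> ginord \<longleftrightarrow> (i1, i2) \<in> P1"
   and ic2: "\<forall>i1\<in>input_edges V E src tgt. \<forall>i2\<in>input_edges V E src tgt.
        (i1, i2) \<in> ginord \<longleftrightarrow> (i1, i2) \<in> P2"
    using assms(4,5) unfolding compatible_order_def by simp_all
  have s1: "slin_on E P1" and s2: "slin_on E P2"
    using pl1 pl2 unfolding planar_order_def by auto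
  note f1 = slin_facts[OF s1] and f2 = slin_facts[OF s2]
  have ep1: "\<And>a b. edge_path E src tgt a b \<Longrightarrow> (a,b) \<in> P1"
   and ep2: "\<And>a b. edge_path E src tgt a b \<Longrightarrow> (a,b) \<in> P2"
    using pl1 pl2 unfolding planar_order_def by auto
  have pp1: "\<And>a b c. (a,b) \<in> P1 \<Longrightarrow> (b,c) \<in> P1 \<Longrightarrow> edge_path E src tgt a c \<Longrightarrow>
        edge_path E src tgt a b \<or> edge_path E src tgt b c"
   and pp2: "\<And>a b c. (a,b) \<in> P2 \<Longrightarrow> (b,c) \<in> P2 \<Longrightarrow> edge_path E src tgt a c \<Longrightarrow>
        edge_path E src tgt a b \<or> edge_path E src tgt b c"
    using pl1 pl2 unfolding planar_order_def by blast+
  obtain m m' where mE: "m \<in> E" and m'E: "m' \<in> E" and neq: "m \<noteq> m'"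
    and mm'1: "(m,m') \<in> P1" and m'm2: "(m',m) \<in> P2"
    and d1: "\<And>y. (y,m) \<in> P1 \<Longrightarrow> (y,m') \<in> P2" and d2: "\<And>y. (y,m') \<in> P2 \<Longrightarrow> (y,m) \<in> P1"
    using key_pair[OF s1 s2 pg(1) ne] by blast
  define v where "v = src m"
  define w where "w = src m'"
  have epin: "\<And>d x. d \<in> E \<Longrightarrow> x \<in> E \<Longrightarrow> tgt d = src x \<Longrightarrow> edge_path E src tgt d x"
  proof -
    fix d x assume h: "d \<in> E" "x \<in> E" "tgt d = src x"
    have "d \<noteq> x"
    proof
      assume "d = x"
      hence "(src d, src d) \<in> ?Rv" using h by force
      thus False using pg(3) by blast
    qed
    thus "edge_path E src tgt d x" unfolding edge_path_def using h by auto
  qed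
  have A: "\<And>d. d \<in> in_edges E tgt v \<Longrightarrow> edge_path E src tgt d m'"
  proof -
    fix d assume "d \<in> in_edges E tgt v"
    hence dE: "d \<in> E" and "tgt d = src m" unfolding in_edges_def v_def by auto
    hence e: "edge_path E src tgt d m" using epin mE by auto
    hence "(d,m') \<in> P2" using ep1 d1 by blast
    from pp2[OF this m'm2 e] show "edge_path E src tgt d m'"
      using ep1 mm'1 f1(5) by blast
  qed
  have B: "\<And>d. d \<in> in_edges E tgt w \<Longrightarrow> edge_path E src tgt d m"
  proof -
    fix d assume "d \<in> in_edges E tgt w"
    hence dE: "d \<in> E" and "tgt d = src m'" unfolding in_edges_def w_def by auto
    hence e: "edge_path E src tgt d m'" using epin m'E by auto
    hence "(d,m) \<in> P1" using ep2 d2 by blast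
    from pp1[OF this mm'1 e] show "edge_path E src tgt d m"
      using ep2 m'm2 f2(5) by blast
  qed
  have vV: "v \<in> V" and wV: "w \<in> V" using pg(2) mE m'E v_def w_def by auto
  show False
  proof (cases "v = w")
    case True
    have "m \<in> out_edges E src v" "m' \<in> out_edges E src v"
      using mE m'E True v_def w_def unfolding out_edges_def by auto
    hence "(m,m') \<in> outord v" using oc1 vV mm'1 by blast
    hence "(m,m') \<in> P2" using oc2 vV \<open>m \<in> out_edges E src v\<close> \<open>m' \<in> out_edges E src v\<close> by blast
    thus False using m'm2 f2(5) by blast
  next
    case vw: False
    show False
    proof (cases "in_edges E tgt v = {}")
      case vs: True
      show False
      proof (cases "in_edges E tgt w = {}")
        case ws: True
        have "v \<in> boundary V E src tgt" "w \<in> boundary V E src tgt"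
          unfolding boundary_def using pg(4)[OF vV vs] pg(4)[OF wV ws] vV wV by simp_all
        hence "m \<in> input_edges V E src tgt" "m' \<in> input_edges V E src tgt"
          unfolding input_edges_def using mE m'E by (simp_all add: v_def w_def)
        hence "(m,m') \<in> ginord" "m \<in> input_edges V E src tgt" "m' \<in> input_edges V E src tgt"
          using ic1 mm'1 by blast+
        hence "(m,m') \<in> P2" using ic2 by blast
        thus False using m'm2 f2(5) by blast
      next
        case False
        then obtain d where "d \<in> in_edges E tgt w" by blast
        hence dm: "(d,m) \<in> ?R\<^sup>+" using B[of d] unfolding edge_path_def by simp
        obtain x where "x \<in> E" "tgt x = src m" using last_step[OF dm] by blast
        hence "x \<in> in_edges E tgt v" unfolding in_edges_def v_def by auto
        thus False using vs by blast
      qed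
    next
      case False
      then obtain d where dv: "d \<in> in_edges E tgt v" by blast
      show False
      proof (cases "in_edges E tgt w = {}")
        case ws: True
        have dm: "(d,m') \<in> ?R\<^sup>+" using A[OF dv] unfolding edge_path_def by simp
        obtain x where "x \<in> E" "tgt x = src m'" using last_step[OF dm] by blast
        hence "x \<in> in_edges E tgt w" unfolding in_edges_def w_def by auto
        thus False using ws by blast
      next
        case False
        then obtain e where ew: "e \<in> in_edges E tgt w" by blast
        have "(d,m') \<in> ?R\<^sup>+" using A[OF dv] unfolding edge_path_def by simp
        hence "(tgt d, src m') \<in> ?Rv\<^sup>*" by (rule vpath)
        hence vw1: "(v, w) \<in> ?Rv\<^sup>*" using dv w_def unfolding in_edges_def by auto
        have "(e,m) \<in> ?R\<^sup>+" using B[OF ew] unfolding edge_path_def by simp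
        hence "(tgt e, src m) \<in> ?Rv\<^sup>*" by (rule vpath)
        hence wv1: "(w, v) \<in> ?Rv\<^sup>*" using ew v_def unfolding in_edges_def by auto
        have "(v, w) \<in> ?Rv\<^sup>+" using rtranclD[OF vw1] vw by blast
        hence "(v, v) \<in> ?Rv\<^sup>+" using wv1 by (rule trancl_rtrancl_trancl)
        thus False using pg(3) by blast
      qed
    qed
  qed
qed

end
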